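(* Let $c:\mathbb{R}^d\times\mathbb{R}^d\to\mathbb{R}$ be continuous and let $\mu,\nu$ be probability measures on $\mathbb{R}^d$ with compact support, absolutely continuous with respect to Lebesgue measure, with $\int\log\frac{d\mu}{d\mathcal L^d}\,d\mu<\infty$ and $\int\log\frac{d\nu}{d\mathcal L^d}\,d\nu<\infty$. Let $W_c(\mu,\nu)=\min_{\gamma\in\Pi(\mu,\nu)}\int c\,d\gamma$ and $\mathcal O_c(\mu,\nu)$ the set of minimizers. Then, on $\Pi(\mu,\nu)$ with the narrow topology, the functionals $$H_\varepsilon(\gamma)=\frac1\varepsilon\Big(\int c\,d\gamma-W_c(\mu,\nu)\Big)+\operatorname{Ent}(\gamma\,|\,\mu\otimes\nu)$$ $\Gamma$-converge as $\varepsilon\to0$ to $H(\gamma)=\operatorname{Ent}(\gamma|\mu\otimes\nu)$ if $\gamma\in\mathcal O_c(\mu,\nu)$ and $H(\gamma)=+\infty$ otherwise.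
   Context: $\Pi(\mu,\nu)$ is the set of probability measures on $\mathbb{R}^d\times\mathbb{R}^d$ with marginals $\mu,\nu$. The relative entropy is $\operatorname{Ent}(\gamma|\rho)=\int\log\frac{d\gamma}{d\rho}\,d\gamma$ if $\gamma\ll\rho$, and $+\infty$ otherwise. $\Gamma$-convergence of $F_\varepsilon$ to $F$ means: for every $\gamma$ and every $\gamma_\varepsilon\to\gamma$, $\liminf F_\varepsilon(\gamma_\varepsilon)\ge F(\gamma)$; and for every $\gamma$ there exist $\gamma_\varepsilon\to\gamma$ with $\limsup F_\varepsilon(\gamma_\varepsilon)\le F(\gamma)$. *)

theory Defs
  imports "HOL-Probability.Probability"
begin

definition rel_ent :: "'b measure \<Rightarrow> 'b measure \<Rightarrow> ereal" where
  "rel_ent \<gamma> \<rho> =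
     (if absolutely_continuous \<rho> \<gamma> \<and> sets \<gamma> = sets \<rho>
      then enn2ereal (\<integral>\<^sup>+ x. ennreal (ln (enn2real (RN_deriv \<rho> \<gamma> x))) \<partial>\<gamma>)
         - enn2ereal (\<integral>\<^sup>+ x. ennreal (- ln (enn2real (RN_deriv \<rho> \<gamma> x))) \<partial>\<gamma>)
      else \<infinity>)"

definition couplings :: "'a::euclidean_space measure \<Rightarrow> 'a measure \<Rightarrow> ('a \<times> 'a) measure set" where
  "couplings \<mu> \<nu> = {\<gamma>. prob_space \<gamma> \<and> sets \<gamma> = sets borel \<and>
       distr \<gamma> borel fst = \<mu> \<and> distr \<gamma> borel snd = \<nu>}"

definition ot_cost :: "('a::euclidean_space \<times> 'a \<Rightarrow> real) \<Rightarrow> 'a measure \<Rightarrow> 'a measure \<Rightarrow> real" where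
  "ot_cost c \<mu> \<nu> = (INF \<gamma>\<in>couplings \<mu> \<nu>. \<integral> z. c z \<partial>\<gamma>)"

definition opt_couplings :: "('a::euclidean_space \<times> 'a \<Rightarrow> real) \<Rightarrow> 'a measure \<Rightarrow> 'a measure \<Rightarrow> ('a \<times> 'a) measure set" where
  "opt_couplings c \<mu> \<nu> = {\<gamma> \<in> couplings \<mu> \<nu>. (\<integral> z. c z \<partial>\<gamma>) = ot_cost c \<mu> \<nu>}"

definition narrow_conv :: "'i filter \<Rightarrow> ('i \<Rightarrow> 'b::topological_space measure) \<Rightarrow> 'b measure \<Rightarrow> bool" where
  "narrow_conv F \<gamma>s \<gamma> \<longleftrightarrow>
     (\<forall>f::'b \<Rightarrow> real. continuous_on UNIV f \<longrightarrow> bounded (range f) \<longrightarrow>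
        ((\<lambda>i. \<integral> z. f z \<partial>(\<gamma>s i)) \<longlongrightarrow> (\<integral> z. f z \<partial>\<gamma>)) F)"

definition gamma_conv_narrow ::
  "'b::topological_space measure set \<Rightarrow> (real \<Rightarrow> 'b measure \<Rightarrow> ereal) \<Rightarrow> ('b measure \<Rightarrow> ereal) \<Rightarrow> bool" where
  "gamma_conv_narrow X G G0 \<longleftrightarrow>
     (\<forall>\<gamma>\<in>X. \<forall>\<gamma>s. (\<forall>\<^sub>F e in at_right 0. \<gamma>s e \<in> X) \<longrightarrow> narrow_conv (at_right 0) \<gamma>s \<gamma> \<longrightarrow>
          Liminf (at_right 0) (\<lambda>e. G e (\<gamma>s e)) \<ge> G0 \<gamma>) \<and>
     (\<forall>\<gamma>\<in>X. \<exists>\<gamma>s. (\<forall>e>0. \<gamma>s e \<in> X) \<and> narrow_conv (at_right 0) \<gamma>s \<gamma> \<and>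
          Limsup (at_right 0) (\<lambda>e. G e (\<gamma>s e)) \<le> G0 \<gamma>)"

end

theory Submission
  imports Defs
begin


lemma rn_setup:
  assumes rho: "prob_space \<rho>" and gam: "prob_space \<gamma>" and sg: "sets \<gamma> = sets \<rho>"
    and ac: "absolutely_continuous \<rho> \<gamma>"
    and g_def: "g = (\<lambda>x. enn2real (RN_deriv \<rho> \<gamma> x))"
  shows "g \<in> borel_measurable \<rho>" "\<And>x. 0 \<le> g x" "\<gamma> = density \<rho> (\<lambda>x. ennreal (g x))"
        "AE x in \<gamma>. 0 < g x" "(\<integral>\<^sup>+x. ennreal (- ln (g x)) \<partial>\<gamma>) \<le> 1"
        "integrable \<rho> g" "(\<integral>x. g x \<partial>\<rho>) = 1"
proof -
  interpret R: prob_space \<rho> by fact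
  interpret G: prob_space \<gamma> by fact
  show gm: "g \<in> borel_measurable \<rho>" unfolding g_def by measurable
  show g0: "\<And>x. 0 \<le> g x" unfolding g_def by simp
  have d: "density \<rho> (RN_deriv \<rho> \<gamma>) = \<gamma>"
    using R.density_RN_deriv[OF ac sg] .
  have fin: "AE x in \<rho>. RN_deriv \<rho> \<gamma> x \<noteq> \<infinity>"
    using R.RN_deriv_finite[OF _ ac sg] G.sigma_finite_measure_axioms by blast
  have "density \<rho> (RN_deriv \<rho> \<gamma>) = density \<rho> (\<lambda>x. ennreal (g x))"
    apply (rule density_cong)
    using gm fin by (auto simp: g_def ennreal_enn2real_if)
  then show gd: "\<gamma> = density \<rho> (\<lambda>x. ennreal (g x))" using d by simp
  show "AE x in \<gamma>. 0 < g x"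
    apply (subst gd) apply (subst AE_density) using gm by auto
  have "(\<integral>\<^sup>+x. ennreal (- ln (g x)) \<partial>\<gamma>) = (\<integral>\<^sup>+x. ennreal (g x) * ennreal (- ln (g x)) \<partial>\<rho>)"
    apply (subst gd) apply (subst nn_integral_density) using gm by auto
  also have "\<dots> \<le> (\<integral>\<^sup>+x. 1 \<partial>\<rho>)"
  proof (rule nn_integral_mono)
    fix x
    have "g x * (- ln (g x)) \<le> 1"
    proof (cases "g x = 0")
      case False
      then have p: "g x > 0" using g0[of x] by simp
      have "ln (1 / g x) \<le> 1 / g x - 1" using p by (intro ln_le_minus_one) simp
      then have "- ln (g x) \<le> 1 / g x - 1" using p by (simp add: ln_div)
      then have "g x * (- ln (g x)) \<le> g x * (1 / g x - 1)" using p by (intro mult_left_mono) auto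
      also have "\<dots> = 1 - g x" using p by (simp add: field_simps)
      finally show ?thesis using p by simp
    qed simp
    then show "ennreal (g x) * ennreal (- ln (g x)) \<le> 1"
      using g0[of x] by (simp add: ennreal_mult'[symmetric] ennreal_le_1)
  qed
  also have "\<dots> = 1" by (simp add: R.emeasure_space_1)
  finally show "(\<integral>\<^sup>+x. ennreal (- ln (g x)) \<partial>\<gamma>) \<le> 1" .
  have n1: "(\<integral>\<^sup>+x. ennreal (g x) \<partial>\<rho>) = ennreal 1"
  proof -
    have "(\<integral>\<^sup>+x. 1 \<partial>\<gamma>) = (\<integral>\<^sup>+x. ennreal (g x) * 1 \<partial>\<rho>)"
      apply (subst gd) apply (subst nn_integral_density) using gm by auto
    then show ?thesis using G.emeasure_space_1 by simp
  qed
  show "integrable \<rho> g"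
    by (rule integrableI_nn_integral_finite[OF gm _ n1]) (simp add: g0)
  show "(\<integral>x. g x \<partial>\<rho>) = 1"
    using integral_eq_nn_integral[OF gm] n1 g0 by simp
qed


lemma e2e: "x \<noteq> top \<Longrightarrow> enn2ereal x = ereal (enn2real x)"
proof -
  assume "x \<noteq> top"
  then have "x = ennreal (enn2real x)" by (simp add: less_top)
  then show ?thesis by (metis enn2ereal_ennreal enn2real_nonneg)
qed

lemma bint:
  fixes f :: "'b \<Rightarrow> real"
  assumes "finite_measure M" "f \<in> borel_measurable M" "\<And>x. \<bar>f x\<bar> \<le> B"
  shows "integrable M f"
  using finite_measure.integrable_const_bound[OF assms(1), of f B] assms(2,3) by auto

lemma gibbs:
  assumes rho: "prob_space \<rho>" and gam: "prob_space \<gamma>" and sg: "sets \<gamma> = sets \<rho>"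
    and phm: "\<phi> \<in> borel_measurable \<rho>" and phb: "\<And>x. \<bar>\<phi> x\<bar> \<le> N"
  shows "ereal ((\<integral>x. \<phi> x \<partial>\<gamma>) - ln (\<integral>x. exp (\<phi> x) \<partial>\<rho>)) \<le> rel_ent \<gamma> \<rho>"
proof (cases "absolutely_continuous \<rho> \<gamma>")
  case False then show ?thesis by (simp add: rel_ent_def)
next
  case ac: True
  interpret R: prob_space \<rho> by fact
  interpret G: prob_space \<gamma> by fact
  define g where "g = (\<lambda>x. enn2real (RN_deriv \<rho> \<gamma> x))"
  note S = rn_setup[OF rho gam sg ac g_def]
  define P where "P = (\<integral>\<^sup>+x. ennreal (ln (g x)) \<partial>\<gamma>)"
  define Q where "Q = (\<integral>\<^sup>+x. ennreal (- ln (g x)) \<partial>\<gamma>)"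
  have re: "rel_ent \<gamma> \<rho> = enn2ereal P - enn2ereal Q"
    by (simp add: rel_ent_def ac sg P_def Q_def g_def)
  have Q1: "Q \<le> 1" using S(5) by (simp add: Q_def)
  then have Qf: "Q \<noteq> \<infinity>" by (auto simp: top_unique)
  show ?thesis
  proof (cases "P = \<infinity>")
    case True
    then show ?thesis using Qf by (simp add: re)
  next
    case Pf: False
    have meq: "\<And>X. measurable \<gamma> X = measurable \<rho> X" by (rule measurable_cong_sets[OF sg refl])
    have gmg: "g \<in> borel_measurable \<gamma>" unfolding meq by (rule S(1))
    have Lm: "(\<lambda>x. ln (g x)) \<in> borel_measurable \<gamma>" using gmg by measurable
    have phg: "\<phi> \<in> borel_measurable \<gamma>" unfolding meq by (rule phm)
    have "(\<integral>\<^sup>+x. ennreal (norm (ln (g x))) \<partial>\<gamma>) = (\<integral>\<^sup>+x. ennreal (ln (g x)) + ennreal (- ln (g x)) \<partial>\<gamma>)"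
      by (intro nn_integral_cong) (auto simp: abs_real_def ennreal_neg)
    also have "\<dots> = P + Q" unfolding P_def Q_def
      by (rule nn_integral_add) (use Lm in auto)
    finally have "(\<integral>\<^sup>+x. ennreal (norm (ln (g x))) \<partial>\<gamma>) < \<infinity>" using Pf Qf
      by (simp add: less_top)
    then have Li: "integrable \<gamma> (\<lambda>x. ln (g x))" using Lm by (simp add: integrable_iff_bounded)
    have iL: "(\<integral>x. ln (g x) \<partial>\<gamma>) = enn2real P - enn2real Q"
      using real_lebesgue_integral_def[OF Li] by (simp add: P_def Q_def)
    have re2: "rel_ent \<gamma> \<rho> = ereal (enn2real P - enn2real Q)"
      using Pf Qf by (simp add: re e2e)
    define Z where "Z = (\<integral>x. exp (\<phi> x) \<partial>\<rho>)"
    have ei: "integrable \<rho> (\<lambda>x. exp (\<phi> x))"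
      by (rule bint[where B="exp N"]) (use phm phb abs_le_D1 in auto)
    have "(\<integral>x. exp (- N) \<partial>\<rho>) \<le> Z" unfolding Z_def
    proof (rule integral_mono[OF _ ei])
      fix x show "exp (- N) \<le> exp (\<phi> x)" using phb[of x] by simp
    qed simp
    then have "exp (- N) \<le> Z" by (simp add: R.prob_space)
    then have Zp: "0 < Z" using exp_gt_zero less_le_trans by blast
    define h where "h = (\<lambda>x. \<phi> x - ln Z)"
    have hm: "h \<in> borel_measurable \<rho>" unfolding h_def using phm by measurable
    have phi: "integrable \<gamma> \<phi>" by (rule bint[where B=N]) (use phg phb in auto)
    have hi: "integrable \<gamma> h" unfolding h_def using phi by simp
    have ih: "(\<integral>x. h x \<partial>\<gamma>) = (\<integral>x. \<phi> x \<partial>\<gamma>) - ln Z"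
      unfolding h_def using phi by (simp add: G.prob_space)
    have kb: "\<And>x. \<bar>g x * (exp (h x) / g x)\<bar> \<le> exp (h x)"
      using S(2) by (auto simp: abs_mult)
    have hb: "\<And>x. \<bar>exp (h x)\<bar> \<le> exp (N - ln Z)"
      using phb unfolding h_def by (auto simp: abs_le_iff)
    have ki: "integrable \<rho> (\<lambda>x. g x * (exp (h x) / g x))"
      by (rule bint[where B="exp (N - ln Z)"]) (use hm S(1) kb hb order_trans in \<open>auto\<close>)
    have km: "(\<lambda>x. exp (h x) / g x) \<in> borel_measurable \<rho>" using hm S(1) by measurable
    have ki2: "integrable \<gamma> (\<lambda>x. exp (h x) / g x)"
      apply (subst S(3)) apply (subst integrable_density) using km S(1,2) ki by auto
    have "(\<integral>x. h x - ln (g x) \<partial>\<gamma>) \<le> (\<integral>x. exp (h x) / g x - 1 \<partial>\<gamma>)"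
    proof (rule integral_mono_AE)
      show "integrable \<gamma> (\<lambda>x. h x - ln (g x))" using hi Li by simp
      show "integrable \<gamma> (\<lambda>x. exp (h x) / g x - 1)" using ki2 by simp
      show "AE x in \<gamma>. h x - ln (g x) \<le> exp (h x) / g x - 1"
        using S(4)
      proof eventually_elim
        case (elim x)
        have "ln (exp (h x) / g x) \<le> exp (h x) / g x - 1"
          using elim by (intro ln_le_minus_one) simp
        then show ?case using elim by (simp add: ln_div)
      qed
    qed
    also have "\<dots> = (\<integral>x. exp (h x) / g x \<partial>\<gamma>) - 1"
      using ki2 by (simp add: G.prob_space)
    also have "(\<integral>x. exp (h x) / g x \<partial>\<gamma>) = (\<integral>x. g x * (exp (h x) / g x) \<partial>\<rho>)"
      apply (subst S(3)) apply (subst integral_density) using km S(1,2) by auto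
    also have "\<dots> \<le> (\<integral>x. exp (h x) \<partial>\<rho>)"
    proof (rule integral_mono[OF ki])
      show "integrable \<rho> (\<lambda>x. exp (h x))"
        by (rule bint[where B="exp (N - ln Z)"]) (use hm hb in auto)
      show "\<And>x. x \<in> space \<rho> \<Longrightarrow> g x * (exp (h x) / g x) \<le> exp (h x)"
        using kb by (auto simp: abs_le_iff)
    qed
    also have "(\<integral>x. exp (h x) \<partial>\<rho>) = 1"
    proof -
      have "(\<lambda>x. exp (h x)) = (\<lambda>x. exp (\<phi> x) / Z)" using Zp by (auto simp: h_def exp_diff)
      then show ?thesis using Zp by (simp add: Z_def[symmetric])
    qed
    finally have "(\<integral>x. h x - ln (g x) \<partial>\<gamma>) \<le> 0" by simp
    then have "(\<integral>x. h x \<partial>\<gamma>) \<le> (\<integral>x. ln (g x) \<partial>\<gamma>)" using hi Li by simp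
    then show ?thesis unfolding re2 using ih iL by (simp add: Z_def)
  qed
qed


lemma dv_meas:
  assumes rho: "prob_space \<rho>" and gam: "prob_space \<gamma>" and sg: "sets \<gamma> = sets \<rho>"
    and Mlt: "ereal M < rel_ent \<gamma> \<rho>"
  shows "\<exists>\<phi> N. \<phi> \<in> borel_measurable \<rho> \<and> (\<forall>x. \<bar>\<phi> x\<bar> \<le> N) \<and>
           M < (\<integral>x. \<phi> x \<partial>\<gamma>) - ln (\<integral>x. exp (\<phi> x) \<partial>\<rho>)"
proof (cases "absolutely_continuous \<rho> \<gamma>")
  case False
  interpret R: prob_space \<rho> by fact
  interpret G: prob_space \<gamma> by fact
  from False obtain A where A: "A \<in> null_sets \<rho>" "A \<notin> null_sets \<gamma>"
    unfolding absolutely_continuous_def by blast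
  have As: "A \<in> sets \<rho>" "A \<in> sets \<gamma>" using A(1) sg by auto
  have mA: "measure \<gamma> A > 0"
    using A(2) As(2) G.emeasure_eq_measure by (auto simp: null_sets_def zero_less_measure_iff)
  define t where "t = (\<bar>M\<bar> + 1) / measure \<gamma> A"
  have tp: "t > 0" using mA by (simp add: t_def)
  define \<phi> where "\<phi> = (\<lambda>x. t * indicator A x)"
  have pm: "\<phi> \<in> borel_measurable \<rho>" unfolding \<phi>_def using As by measurable
  have pb: "\<forall>x. \<bar>\<phi> x\<bar> \<le> t" using tp by (auto simp: \<phi>_def indicator_def)
  have i1: "(\<integral>x. \<phi> x \<partial>\<gamma>) = \<bar>M\<bar> + 1"
    using As mA by (simp add: \<phi>_def t_def)
  have "AE x in \<rho>. exp (\<phi> x) = 1"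
    using AE_not_in[OF A(1)] by eventually_elim (simp add: \<phi>_def)
  then have "(\<integral>x. exp (\<phi> x) \<partial>\<rho>) = (\<integral>x. 1 \<partial>\<rho>)"
    by (intro integral_cong_AE) (use pm in auto)
  then have i2: "(\<integral>x. exp (\<phi> x) \<partial>\<rho>) = 1" by (simp add: R.prob_space)
  show ?thesis using pm pb i1 i2 by (intro exI[of _ \<phi>] exI[of _ t]) auto
next
  case ac: True
  interpret R: prob_space \<rho> by fact
  interpret G: prob_space \<gamma> by fact
  define g where "g = (\<lambda>x. enn2real (RN_deriv \<rho> \<gamma> x))"
  note S = rn_setup[OF rho gam sg ac g_def]
  have meq: "\<And>X. measurable \<gamma> X = measurable \<rho> X" by (rule measurable_cong_sets[OF sg refl])
  have gmg: "g \<in> borel_measurable \<gamma>" unfolding meq by (rule S(1))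
  define P where "P = (\<integral>\<^sup>+x. ennreal (ln (g x)) \<partial>\<gamma>)"
  define Q where "Q = (\<integral>\<^sup>+x. ennreal (- ln (g x)) \<partial>\<gamma>)"
  have re: "rel_ent \<gamma> \<rho> = enn2ereal P - enn2ereal Q"
    by (simp add: rel_ent_def ac sg P_def Q_def g_def)
  have Q1: "Q \<le> 1" using S(5) by (simp add: Q_def)
  then have Qf: "Q \<noteq> \<infinity>" by (auto simp: top_unique)
  define q where "q = enn2real Q"
  have eQ: "enn2ereal Q = ereal q" using Qf by (simp add: q_def e2e)
  have Pgt: "ereal (M + q) < enn2ereal P"
  proof (cases "enn2ereal P")
    case (real p) then show ?thesis using Mlt by (simp add: re eQ)
  next
    case PInf then show ?thesis by simp
  next
    case MInf then show ?thesis using enn2ereal_nonneg[of P] by simp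
  qed
  obtain r where r: "ereal (M + q) < ereal r" "ereal r < enn2ereal P"
    using ereal_dense2[OF Pgt] by blast
  define \<delta> where "\<delta> = r - (M + q)"
  have dp: "\<delta> > 0" using r(1) by (simp add: \<delta>_def)
  define a where "a = (\<lambda>(N::nat) x. min (real N) (max 0 (ln (g x))))"
  have am: "\<And>N. a N \<in> borel_measurable \<gamma>" unfolding a_def using gmg by measurable
  define A where "A = (\<lambda>N. enn2real (\<integral>\<^sup>+x. ennreal (a N x) \<partial>\<gamma>))"
  have afin: "(\<integral>\<^sup>+x. ennreal (a N x) \<partial>\<gamma>) \<le> ennreal (real N)" for N
  proof -
    have "(\<integral>\<^sup>+x. ennreal (a N x) \<partial>\<gamma>) \<le> (\<integral>\<^sup>+x. ennreal (real N) \<partial>\<gamma>)"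
      by (intro nn_integral_mono ennreal_leI) (simp add: a_def)
    then show ?thesis by (simp add: G.emeasure_space_1)
  qed
  have amono: "A N0 \<le> A N" if "N0 \<le> N" for N0 N
  proof -
    have "(\<integral>\<^sup>+x. ennreal (a N0 x) \<partial>\<gamma>) \<le> (\<integral>\<^sup>+x. ennreal (a N x) \<partial>\<gamma>)"
      using that by (intro nn_integral_mono ennreal_leI) (auto simp: a_def)
    then show ?thesis unfolding A_def
      by (rule enn2real_mono) (use afin[of N] in \<open>auto simp: less_top[symmetric] top_unique\<close>)
  qed
  have Psup: "P = (SUP N. \<integral>\<^sup>+x. ennreal (a N x) \<partial>\<gamma>)"
  proof -
    have "P = (\<integral>\<^sup>+x. (SUP N. ennreal (a N x)) \<partial>\<gamma>)"
      unfolding P_def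
    proof (intro nn_integral_cong antisym)
      fix x
      show "(SUP N. ennreal (a N x)) \<le> ennreal (ln (g x))"
      proof (intro SUP_least)
        fix N show "ennreal (a N x) \<le> ennreal (ln (g x))"
          by (cases "ln (g x) \<le> 0") (auto simp: a_def intro!: ennreal_leI)
      qed
      show "ennreal (ln (g x)) \<le> (SUP N. ennreal (a N x))"
      proof (rule SUP_upper2[where i="nat \<lceil>ln (g x)\<rceil>"])
        show "ennreal (ln (g x)) \<le> ennreal (a (nat \<lceil>ln (g x)\<rceil>) x)"
        proof -
          have "real (nat \<lceil>ln (g x)\<rceil>) \<ge> max 0 (ln (g x))"
            using real_nat_ceiling_ge[of "ln (g x)"] by simp
          then have "a (nat \<lceil>ln (g x)\<rceil>) x = max 0 (ln (g x))" unfolding a_def by simp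
          then show ?thesis by (auto intro!: ennreal_leI)
        qed
      qed simp
    qed
    also have "\<dots> = (SUP N. \<integral>\<^sup>+x. ennreal (a N x) \<partial>\<gamma>)"
      by (rule nn_integral_monotone_convergence_SUP)
         (use am in \<open>auto simp: incseq_def le_fun_def a_def intro!: ennreal_leI\<close>)
    finally show ?thesis .
  qed
  obtain N0 where N0: "r < A N0"
  proof (cases "r < 0")
    case True
    then show ?thesis using that[of 0] enn2real_nonneg[of "\<integral>\<^sup>+x. ennreal (a 0 x) \<partial>\<gamma>"]
      by (simp add: A_def)
  next
    case False
    then have "ennreal r < P" using r(2) by (simp add: less_ennreal.rep_eq)
    then obtain N where "ennreal r < (\<integral>\<^sup>+x. ennreal (a N x) \<partial>\<gamma>)"
      unfolding Psup by (auto simp: less_SUP_iff)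
    moreover have "(\<integral>\<^sup>+x. ennreal (a N x) \<partial>\<gamma>) < top"
      using afin[of N] by (simp add: le_less_trans)
    ultimately have "r < A N" unfolding A_def using False
      by (metis enn2real_ennreal ennreal_less_iff enn2real_nonneg ennreal_enn2real not_le)
    then show ?thesis by (rule that)
  qed
  obtain N1 :: nat where N1: "exp (- real N1) < \<delta>"
  proof -
    define N1 where "N1 = nat \<lceil>1 / \<delta>\<rceil>"
    have "1 / \<delta> < 1 + real N1" unfolding N1_def using real_nat_ceiling_ge[of "1/\<delta>"] by linarith
    also have "\<dots> \<le> exp (real N1)" by simp
    finally have "1 / exp (real N1) < \<delta>" using dp
      by (simp add: divide_less_eq mult.commute pos_divide_less_eq)
    then show ?thesis using that[of N1] by (simp add: exp_minus inverse_eq_divide)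
  qed
  define N where "N = max N0 N1"
  have AN: "r < A N" using N0 amono[of N0 N] by (simp add: N_def)
  have "exp (- real N) \<le> exp (- real N1)" by (simp add: N_def)
  then have eN: "exp (- real N) < \<delta>" using N1 by linarith
  define \<phi> where "\<phi> = (\<lambda>x. min (real N) (ln (max (g x) (exp (- real N)))))"
  have pm: "\<phi> \<in> borel_measurable \<rho>" unfolding \<phi>_def using S(1) by measurable
  have pge: "- real N \<le> ln (max (g x) (exp (- real N)))" for x
  proof -
    have "ln (exp (- real N)) \<le> ln (max (g x) (exp (- real N)))"
      by (subst ln_le_cancel_iff) (auto simp: less_max_iff_disj)
    then show ?thesis by simp
  qed
  have pb: "\<forall>x. \<bar>\<phi> x\<bar> \<le> real N"
  proof
    fix x show "\<bar>\<phi> x\<bar> \<le> real N" using pge[of x] unfolding \<phi>_def abs_le_iff by linarith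
  qed
  define b where "b = (\<lambda>x. min (real N) (max 0 (- ln (g x))))"
  have bm: "b \<in> borel_measurable \<gamma>" unfolding b_def using gmg by measurable
  have pae: "AE x in \<gamma>. \<phi> x = a N x - b x"
    using S(4)
  proof eventually_elim
    case (elim x)
    show ?case
    proof (cases "g x \<ge> exp (- real N)")
      case True
      then have "ln (exp (- real N)) \<le> ln (g x)"
        by (subst ln_le_cancel_iff) (use elim in auto)
      then have "ln (g x) \<ge> - real N" by simp
      then show ?thesis using True by (auto simp: \<phi>_def a_def b_def max_def min_def)
    next
      case False
      then have "ln (g x) < ln (exp (- real N))"
        by (subst ln_less_cancel_iff) (use elim in auto)
      then have "ln (g x) < - real N" by simp
      then show ?thesis using False by (auto simp: \<phi>_def a_def b_def max_def min_def)
    qed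
  qed
  have pmg: "\<phi> \<in> borel_measurable \<gamma>" unfolding meq by (rule pm)
  have ai: "integrable \<gamma> (a N)" by (rule bint[where B="real N"]) (use am in \<open>auto simp: a_def\<close>)
  have bi: "integrable \<gamma> b" by (rule bint[where B="real N"]) (use bm in \<open>auto simp: b_def\<close>)
  have "(\<integral>x. \<phi> x \<partial>\<gamma>) = (\<integral>x. a N x - b x \<partial>\<gamma>)"
    by (rule integral_cong_AE) (use pmg am bm pae in auto)
  also have "\<dots> = (\<integral>x. a N x \<partial>\<gamma>) - (\<integral>x. b x \<partial>\<gamma>)" using ai bi by simp
  also have "(\<integral>x. a N x \<partial>\<gamma>) = A N" unfolding A_def
    by (rule integral_eq_nn_integral) (use am in \<open>auto simp: a_def\<close>)
  also have "(\<integral>x. b x \<partial>\<gamma>) = enn2real (\<integral>\<^sup>+x. ennreal (b x) \<partial>\<gamma>)"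
    by (rule integral_eq_nn_integral) (use bm in \<open>auto simp: b_def\<close>)
  finally have Ieq: "(\<integral>x. \<phi> x \<partial>\<gamma>) = A N - enn2real (\<integral>\<^sup>+x. ennreal (b x) \<partial>\<gamma>)" .
  have "enn2real (\<integral>\<^sup>+x. ennreal (b x) \<partial>\<gamma>) \<le> q" unfolding q_def
  proof (rule enn2real_mono)
    show "(\<integral>\<^sup>+x. ennreal (b x) \<partial>\<gamma>) \<le> Q" unfolding Q_def
    proof (rule nn_integral_mono)
      fix x show "ennreal (b x) \<le> ennreal (- ln (g x))"
        by (cases "- ln (g x) \<le> 0") (auto simp: b_def intro!: ennreal_leI)
    qed
    show "Q < top" using Qf by (simp add: less_top)
  qed
  then have I1: "(\<integral>x. \<phi> x \<partial>\<gamma>) \<ge> A N - q" using Ieq by simp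
  define Z where "Z = (\<integral>x. exp (\<phi> x) \<partial>\<rho>)"
  have ei: "integrable \<rho> (\<lambda>x. exp (\<phi> x))"
    by (rule bint[where B="exp (real N)"]) (use pm pb abs_le_D1 in auto)
  have "(\<integral>x. exp (- real N) \<partial>\<rho>) \<le> Z" unfolding Z_def
  proof (rule integral_mono[OF _ ei])
    fix x show "exp (- real N) \<le> exp (\<phi> x)" using pb[rule_format, of x] by (simp add: abs_le_iff)
  qed simp
  then have Zp: "0 < Z" by (simp add: R.prob_space) (smt (verit) exp_gt_zero)
  have "Z \<le> (\<integral>x. g x + exp (- real N) \<partial>\<rho>)" unfolding Z_def
  proof (rule integral_mono[OF ei])
    show "integrable \<rho> (\<lambda>x. g x + exp (- real N))" using S(6) by simp
    fix x
    have "exp (\<phi> x) \<le> exp (ln (max (g x) (exp (- real N))))" by (simp add: \<phi>_def)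
    also have "\<dots> = max (g x) (exp (- real N))"
    proof (cases "g x \<le> exp (- real N)")
      case False
      then have "0 < g x" by (meson exp_gt_zero less_trans not_le)
      then show ?thesis using False by (simp add: max_def)
    qed (simp add: max_def)
    also have "\<dots> \<le> g x + exp (- real N)" using S(2)[of x] by simp
    finally show "exp (\<phi> x) \<le> g x + exp (- real N)" .
  qed
  also have "\<dots> = 1 + exp (- real N)" using S(6,7) by (simp add: R.prob_space)
  finally have Zle: "Z \<le> 1 + exp (- real N)" .
  have "ln Z \<le> Z - 1" using Zp by (rule ln_le_minus_one)
  then have lZ: "ln Z < \<delta>" using Zle eN by linarith
  have "M < (\<integral>x. \<phi> x \<partial>\<gamma>) - ln Z" using I1 lZ AN by (simp add: \<delta>_def)
  then show ?thesis using pm pb by (intro exI[of _ \<phi>] exI[of _ "real N"]) (simp add: Z_def)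
qed



lemma bmeas:
  assumes "sets M = sets borel" "f \<in> borel_measurable borel"
  shows "f \<in> borel_measurable M"
  using assms measurable_cong_sets[OF assms(1) refl] by simp

lemma inner_approx:
  fixes M :: "'b::euclidean_space measure"
  assumes P: "prob_space M" and s: "sets M = sets borel" and B: "B \<in> sets borel" and e: "e > 0"
  shows "\<exists>K. compact K \<and> K \<subseteq> B \<and> measure M (B - K) < e"
proof -
  interpret prob_space M by fact
  show ?thesis
  proof (cases "measure M B < e")
    case True then show ?thesis by (intro exI[of _ "{}"]) auto
  next
    case False
    have reg: "emeasure M B = (SUP K \<in> {K. K \<subseteq> B \<and> compact K}. emeasure M K)"
      by (rule inner_regular[OF s]) (use B in auto)
    have "ennreal (measure M B - e) < emeasure M B"
      using False e by (simp add: emeasure_eq_measure ennreal_less_iff)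
    then obtain K where K: "K \<subseteq> B" "compact K" "ennreal (measure M B - e) < emeasure M K"
      unfolding reg by (auto simp: less_SUP_iff)
    have Ks: "K \<in> sets M" using K(2) s by (simp add: compact_imp_closed borel_closed)
    have Bs: "B \<in> sets M" using B s by simp
    have "measure M B - e < measure M K"
      using K(3) False e by (simp add: emeasure_eq_measure ennreal_less_iff)
    moreover have "measure M (B - K) = measure M B - measure M K"
      using Ks Bs K(1) by (simp add: finite_measure_Diff)
    ultimately show ?thesis using K by (intro exI[of _ K]) auto
  qed
qed

lemma outer_approx:
  fixes M :: "'b::euclidean_space measure"
  assumes P: "prob_space M" and s: "sets M = sets borel" and B: "B \<in> sets borel" and e: "e > 0"
  shows "\<exists>U. open U \<and> B \<subseteq> U \<and> measure M (U - B) < e"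
proof -
  interpret prob_space M by fact
  have reg: "emeasure M B = (INF U \<in> {U. B \<subseteq> U \<and> open U}. emeasure M U)"
    by (rule outer_regular[OF s]) (use B in auto)
  have "emeasure M B < ennreal (measure M B + e)"
    using e by (simp add: emeasure_eq_measure ennreal_less_iff)
  then obtain U where U: "B \<subseteq> U" "open U" "emeasure M U < ennreal (measure M B + e)"
    unfolding reg by (auto simp: INF_less_iff)
  have Us: "U \<in> sets M" using U(2) s by (simp add: borel_open)
  have Bs: "B \<in> sets M" using B s by simp
  have "ennreal (measure M U) < ennreal (measure M B + e)"
    using U(3) by (simp add: emeasure_eq_measure del: ennreal_plus)
  then have "measure M U < measure M B + e"
    using e by (subst (asm) ennreal_less_iff) auto
  moreover have "measure M (U - B) = measure M U - measure M B"
    using Us Bs U(1) by (simp add: finite_measure_Diff)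
  ultimately show ?thesis using U by (intro exI[of _ U]) auto
qed

lemma int_tri:
  fixes M :: "'b::euclidean_space measure" and u v :: "'b \<Rightarrow> real"
  assumes P: "prob_space M" and s: "sets M = sets borel"
    and um: "u \<in> borel_measurable borel" and vm: "v \<in> borel_measurable borel"
    and ub: "\<And>x. \<bar>u x\<bar> \<le> Bu" and vb: "\<And>x. \<bar>v x\<bar> \<le> Bv"
  shows "(\<integral>x. \<bar>u x + v x\<bar> \<partial>M) \<le> (\<integral>x. \<bar>u x\<bar> \<partial>M) + (\<integral>x. \<bar>v x\<bar> \<partial>M)"
proof -
  interpret prob_space M by fact
  have fm: "finite_measure M" by unfold_locales
  have iu: "integrable M (\<lambda>x. \<bar>u x\<bar>)"
    by (rule bint[OF fm, where B=Bu]) (use um ub s bmeas in auto)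
  have iv: "integrable M (\<lambda>x. \<bar>v x\<bar>)"
    by (rule bint[OF fm, where B=Bv]) (use vm vb s bmeas in auto)
  have iuv: "integrable M (\<lambda>x. \<bar>u x + v x\<bar>)"
  proof (rule bint[OF fm, where B="Bu+Bv"])
    show "(\<lambda>x. \<bar>u x + v x\<bar>) \<in> borel_measurable M" using um vm s bmeas by simp
    fix x show "\<bar>\<bar>u x + v x\<bar>\<bar> \<le> Bu + Bv" using ub[of x] vb[of x] by simp
  qed
  have "(\<integral>x. \<bar>u x + v x\<bar> \<partial>M) \<le> (\<integral>x. \<bar>u x\<bar> + \<bar>v x\<bar> \<partial>M)"
    by (rule integral_mono[OF iuv]) (use iu iv in auto)
  also have "\<dots> = (\<integral>x. \<bar>u x\<bar> \<partial>M) + (\<integral>x. \<bar>v x\<bar> \<partial>M)" using iu iv by simp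
  finally show ?thesis .
qed

lemma bint2:
  fixes f :: "'b::euclidean_space \<Rightarrow> real"
  assumes "finite_measure M" "sets M = sets borel" "f \<in> borel_measurable borel" "\<And>x. \<bar>f x\<bar> \<le> B"
  shows "integrable M f"
  by (rule bint[OF assms(1) _ assms(4)]) (use assms(2,3) bmeas in auto)

definition capprox :: "'b measure \<Rightarrow> 'b measure \<Rightarrow> ('b::euclidean_space \<Rightarrow> real) \<Rightarrow> bool" where
  "capprox \<rho> \<gamma> h \<longleftrightarrow> h \<in> borel_measurable borel \<and> (\<exists>B. \<forall>x. \<bar>h x\<bar> \<le> B) \<and>
     (\<forall>e>0. \<exists>\<psi> B. continuous_on UNIV \<psi> \<and> (\<forall>x. \<bar>\<psi> x\<bar> \<le> B) \<and>
        (\<integral>x. \<bar>h x - \<psi> x\<bar> \<partial>\<rho>) < e \<and> (\<integral>x. \<bar>h x - \<psi> x\<bar> \<partial>\<gamma>) < e)"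

context
  fixes \<rho> \<gamma> :: "'b::euclidean_space measure"
  assumes rho: "prob_space \<rho>" and gam: "prob_space \<gamma>"
    and sr: "sets \<rho> = sets borel" and sg: "sets \<gamma> = sets borel"
begin

lemma ind_set_bound:
  fixes f :: "'b \<Rightarrow> real"
  assumes M: "prob_space M" "sets M = sets borel" and A: "A \<in> sets borel"
    and f: "f \<in> borel_measurable borel" "\<And>x. \<bar>f x\<bar> \<le> indicator A x"
  shows "(\<integral>x. f x \<partial>M) \<le> measure M A"
proof -
  interpret prob_space M by fact
  have "(\<integral>x. f x \<partial>M) \<le> (\<integral>x. indicator A x \<partial>M)"
  proof (rule integral_mono)
    have "\<bar>f x\<bar> \<le> 1" for x using f(2)[of x] by (cases "x \<in> A") auto
    then show "integrable M f" using bint[where B=1 and f=f and M=M] f(1) M(2) bmeas by auto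
    show "integrable M (indicator A :: 'b \<Rightarrow> real)"
      by (rule integrable_real_indicator) (use A M(2) in \<open>auto simp: less_top[symmetric]\<close>)
    show "\<And>x. x \<in> space M \<Longrightarrow> f x \<le> indicator A x" using f(2) abs_le_D1 by blast
  qed
  then show ?thesis using A M(2) by simp
qed

lemma capprox_indicator:
  assumes B: "B \<in> sets borel"
  shows "capprox \<rho> \<gamma> (indicator B)"
  unfolding capprox_def
proof (intro conjI allI impI)
  show "indicator B \<in> borel_measurable borel" using B by simp
  show "\<exists>C. \<forall>x. \<bar>indicator B x :: real\<bar> \<le> C" by (intro exI[of _ 1]) (simp add: indicator_def)
  fix e :: real assume e: "e > 0"
  obtain K1 where K1: "compact K1" "K1 \<subseteq> B" "measure \<rho> (B - K1) < e/2"
    using inner_approx[OF rho sr B, of "e/2"] e by auto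
  obtain K2 where K2: "compact K2" "K2 \<subseteq> B" "measure \<gamma> (B - K2) < e/2"
    using inner_approx[OF gam sg B, of "e/2"] e by auto
  obtain U1 where U1: "open U1" "B \<subseteq> U1" "measure \<rho> (U1 - B) < e/2"
    using outer_approx[OF rho sr B, of "e/2"] e by auto
  obtain U2 where U2: "open U2" "B \<subseteq> U2" "measure \<gamma> (U2 - B) < e/2"
    using outer_approx[OF gam sg B, of "e/2"] e by auto
  define K where "K = K1 \<union> K2"
  define U where "U = U1 \<inter> U2"
  have K: "compact K" "K \<subseteq> B" using K1 K2 by (auto simp: K_def)
  have U: "open U" "B \<subseteq> U" using U1 U2 by (auto simp: U_def)
  have KU: "K \<inter> (- U) = {}" using K U by auto
  obtain \<psi> :: "'b \<Rightarrow> real" where \<psi>: "continuous_on UNIV \<psi>" "\<And>x. \<psi> x \<in> closed_segment 1 0"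
      "\<And>x. x \<in> K \<Longrightarrow> \<psi> x = 1" "\<And>x. x \<in> - U \<Longrightarrow> \<psi> x = 0"
    using Urysohn[OF compact_imp_closed[OF K(1)] _ KU, of 1 0] U(1) by (auto simp: closed_Compl)
  have \<psi>01: "0 \<le> \<psi> x \<and> \<psi> x \<le> 1" for x using \<psi>(2)[of x] by (simp add: closed_segment_eq_real_ivl)
  have UKs: "U - K \<in> sets borel" using K(1) U(1) by (simp add: compact_imp_closed borel_closed borel_open sets.Diff)
  have pw: "\<bar>\<bar>indicator B x - \<psi> x\<bar>\<bar> \<le> indicator (U - K) x" for x
    using \<psi>01[of x] \<psi>(3)[of x] \<psi>(4)[of x] K(2) U(2) by (auto simp: indicator_def)
  have fm: "(\<lambda>x. \<bar>indicator B x - \<psi> x\<bar>) \<in> borel_measurable borel"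
    using B borel_measurable_continuous_onI[OF \<psi>(1)] by measurable
  have m1: "measure \<rho> (U - K) < e"
  proof -
    interpret R: prob_space \<rho> by (rule rho)
    have "measure \<rho> (U - K) \<le> measure \<rho> ((U1 - B) \<union> (B - K1))"
      using U1 K1 B sr by (intro R.finite_measure_mono) (auto simp: U_def K_def
          compact_imp_closed borel_closed borel_open)
    also have "\<dots> \<le> measure \<rho> (U1 - B) + measure \<rho> (B - K1)"
      by (rule measure_Un_le) (use U1 K1 B sr in \<open>auto simp: compact_imp_closed borel_closed borel_open\<close>)
    finally show ?thesis using U1 K1 by linarith
  qed
  have m2: "measure \<gamma> (U - K) < e"
  proof -
    interpret G: prob_space \<gamma> by (rule gam)
    have "measure \<gamma> (U - K) \<le> measure \<gamma> ((U2 - B) \<union> (B - K2))"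
      using U2 K2 B sg by (intro G.finite_measure_mono) (auto simp: U_def K_def
          compact_imp_closed borel_closed borel_open)
    also have "\<dots> \<le> measure \<gamma> (U2 - B) + measure \<gamma> (B - K2)"
      by (rule measure_Un_le) (use U2 K2 B sg in \<open>auto simp: compact_imp_closed borel_closed borel_open\<close>)
    finally show ?thesis using U2 K2 by linarith
  qed
  have i1: "(\<integral>x. \<bar>indicator B x - \<psi> x\<bar> \<partial>\<rho>) \<le> measure \<rho> (U - K)"
    by (rule ind_set_bound[OF rho sr UKs fm pw])
  have i2: "(\<integral>x. \<bar>indicator B x - \<psi> x\<bar> \<partial>\<gamma>) \<le> measure \<gamma> (U - K)"
    by (rule ind_set_bound[OF gam sg UKs fm pw])
  show "\<exists>\<psi> C. continuous_on UNIV \<psi> \<and> (\<forall>x. \<bar>\<psi> x\<bar> \<le> C) \<and>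
        (\<integral>x. \<bar>indicator B x - \<psi> x\<bar> \<partial>\<rho>) < e \<and> (\<integral>x. \<bar>indicator B x - \<psi> x\<bar> \<partial>\<gamma>) < e"
    using \<psi>(1) \<psi>01 i1 i2 m1 m2 by (intro exI[of _ \<psi>] exI[of _ 1]) auto
qed

lemma capprox_add:
  assumes f: "capprox \<rho> \<gamma> f" and g: "capprox \<rho> \<gamma> g"
  shows "capprox \<rho> \<gamma> (\<lambda>x. f x + g x)"
proof -
  obtain Bf where Bf: "\<And>x. \<bar>f x\<bar> \<le> Bf" using f unfolding capprox_def by blast
  obtain Bg where Bg: "\<And>x. \<bar>g x\<bar> \<le> Bg" using g unfolding capprox_def by blast
  have fm: "f \<in> borel_measurable borel" and gm: "g \<in> borel_measurable borel"
    using f g unfolding capprox_def by auto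
  show ?thesis unfolding capprox_def
  proof (intro conjI allI impI)
    show "(\<lambda>x. f x + g x) \<in> borel_measurable borel" using fm gm by simp
    show "\<exists>B. \<forall>x. \<bar>f x + g x\<bar> \<le> B" using Bf Bg
    proof (intro exI allI)
      fix x show "\<bar>f x + g x\<bar> \<le> Bf + Bg" using Bf[of x] Bg[of x] by linarith
    qed
    fix e :: real assume e: "e > 0"
    obtain \<psi>1 C1 where p1: "continuous_on UNIV \<psi>1" "\<forall>x. \<bar>\<psi>1 x\<bar> \<le> C1"
        "(\<integral>x. \<bar>f x - \<psi>1 x\<bar> \<partial>\<rho>) < e/2" "(\<integral>x. \<bar>f x - \<psi>1 x\<bar> \<partial>\<gamma>) < e/2"
      using f e unfolding capprox_def by (meson half_gt_zero)
    obtain \<psi>2 C2 where p2: "continuous_on UNIV \<psi>2" "\<forall>x. \<bar>\<psi>2 x\<bar> \<le> C2"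
        "(\<integral>x. \<bar>g x - \<psi>2 x\<bar> \<partial>\<rho>) < e/2" "(\<integral>x. \<bar>g x - \<psi>2 x\<bar> \<partial>\<gamma>) < e/2"
      using g e unfolding capprox_def by (meson half_gt_zero)
    have m1: "(\<lambda>x. f x - \<psi>1 x) \<in> borel_measurable borel"
      using fm borel_measurable_continuous_onI[OF p1(1)] by simp
    have m2: "(\<lambda>x. g x - \<psi>2 x) \<in> borel_measurable borel"
      using gm borel_measurable_continuous_onI[OF p2(1)] by simp
    have b1: "\<bar>f x - \<psi>1 x\<bar> \<le> Bf + C1" for x using Bf[of x] p1(2)[rule_format, of x] by linarith
    have b2: "\<bar>g x - \<psi>2 x\<bar> \<le> Bg + C2" for x using Bg[of x] p2(2)[rule_format, of x] by linarith
    have eq: "(\<lambda>x. \<bar>f x + g x - (\<psi>1 x + \<psi>2 x)\<bar>) = (\<lambda>x. \<bar>(f x - \<psi>1 x) + (g x - \<psi>2 x)\<bar>)"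
      by (simp add: algebra_simps)
    have t1: "(\<integral>x. \<bar>f x + g x - (\<psi>1 x + \<psi>2 x)\<bar> \<partial>\<rho>) < e"
      using int_tri[OF rho sr m1 m2 b1 b2] p1(3) p2(3) unfolding eq by simp
    have t2: "(\<integral>x. \<bar>f x + g x - (\<psi>1 x + \<psi>2 x)\<bar> \<partial>\<gamma>) < e"
      using int_tri[OF gam sg m1 m2 b1 b2] p1(4) p2(4) unfolding eq by simp
    show "\<exists>\<psi> B. continuous_on UNIV \<psi> \<and> (\<forall>x. \<bar>\<psi> x\<bar> \<le> B) \<and>
        (\<integral>x. \<bar>f x + g x - \<psi> x\<bar> \<partial>\<rho>) < e \<and> (\<integral>x. \<bar>f x + g x - \<psi> x\<bar> \<partial>\<gamma>) < e"
    proof (intro exI conjI)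
      show "continuous_on UNIV (\<lambda>x. \<psi>1 x + \<psi>2 x)" using p1(1) p2(1) by (intro continuous_intros)
      show "\<forall>x. \<bar>\<psi>1 x + \<psi>2 x\<bar> \<le> C1 + C2"
      proof
        fix x show "\<bar>\<psi>1 x + \<psi>2 x\<bar> \<le> C1 + C2"
          using p1(2)[rule_format, of x] p2(2)[rule_format, of x] by linarith
      qed
    qed (use t1 t2 in auto)
  qed
qed

lemma capprox_scale:
  assumes f: "capprox \<rho> \<gamma> f"
  shows "capprox \<rho> \<gamma> (\<lambda>x. c * f x)"
proof -
  obtain Bf where Bf: "\<And>x. \<bar>f x\<bar> \<le> Bf" using f unfolding capprox_def by blast
  have fm: "f \<in> borel_measurable borel" using f unfolding capprox_def by auto
  show ?thesis unfolding capprox_def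
  proof (intro conjI allI impI)
    show "(\<lambda>x. c * f x) \<in> borel_measurable borel" using fm by simp
    show "\<exists>B. \<forall>x. \<bar>c * f x\<bar> \<le> B" using Bf
      by (intro exI[of _ "\<bar>c\<bar> * Bf"]) (auto simp: abs_mult intro: mult_left_mono)
    fix e :: real assume e: "e > 0"
    define e' where "e' = e / (\<bar>c\<bar> + 1)"
    have e': "e' > 0" using e by (simp add: e'_def)
    obtain \<psi> C where p: "continuous_on UNIV \<psi>" "\<forall>x. \<bar>\<psi> x\<bar> \<le> C"
        "(\<integral>x. \<bar>f x - \<psi> x\<bar> \<partial>\<rho>) < e'" "(\<integral>x. \<bar>f x - \<psi> x\<bar> \<partial>\<gamma>) < e'"
      using f e' unfolding capprox_def by meson
    have eq: "(\<lambda>x. \<bar>c * f x - c * \<psi> x\<bar>) = (\<lambda>x. \<bar>c\<bar> * \<bar>f x - \<psi> x\<bar>)"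
      by (simp add: abs_mult right_diff_distrib[symmetric])
    have k: "\<bar>c\<bar> * y < e" if "y < e'" "0 \<le> y" for y
    proof -
      have "\<bar>c\<bar> * y \<le> (\<bar>c\<bar> + 1) * y" using that by (simp add: mult_right_mono)
      also have "\<dots> < (\<bar>c\<bar> + 1) * e'" using that by (intro mult_strict_left_mono) auto
      also have "\<dots> = e" by (simp add: e'_def)
      finally show ?thesis .
    qed
    show "\<exists>\<psi> B. continuous_on UNIV \<psi> \<and> (\<forall>x. \<bar>\<psi> x\<bar> \<le> B) \<and>
        (\<integral>x. \<bar>c * f x - \<psi> x\<bar> \<partial>\<rho>) < e \<and> (\<integral>x. \<bar>c * f x - \<psi> x\<bar> \<partial>\<gamma>) < e"
    proof (intro exI conjI)
      show "continuous_on UNIV (\<lambda>x. c * \<psi> x)" using p(1) by (intro continuous_intros)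
      show "\<forall>x. \<bar>c * \<psi> x\<bar> \<le> \<bar>c\<bar> * C" using p(2) by (auto simp: abs_mult intro: mult_left_mono)
      show "(\<integral>x. \<bar>c * f x - c * \<psi> x\<bar> \<partial>\<rho>) < e" unfolding eq
        using k[OF p(3)] by simp
      show "(\<integral>x. \<bar>c * f x - c * \<psi> x\<bar> \<partial>\<gamma>) < e" unfolding eq
        using k[OF p(4)] by simp
    qed
  qed
qed

lemma capprox_zero: "capprox \<rho> \<gamma> (\<lambda>x. 0)"
  unfolding capprox_def
  by (auto intro!: exI[of _ "\<lambda>x. 0"] continuous_intros)

lemma capprox_sum:
  assumes "finite S" "\<And>j. j \<in> S \<Longrightarrow> capprox \<rho> \<gamma> (f j)"
  shows "capprox \<rho> \<gamma> (\<lambda>x. \<Sum>j\<in>S. f j x)"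
  using assms
proof (induction S rule: finite_induct)
  case empty then show ?case using capprox_zero by simp
next
  case (insert j S)
  then have "capprox \<rho> \<gamma> (\<lambda>x. f j x + (\<Sum>j\<in>S. f j x))"
    by (intro capprox_add) (auto simp: fun_eq_iff)
  then show ?case using insert by simp
qed

lemma capprox_all:
  assumes hm: "h \<in> borel_measurable borel" and hb: "\<And>x. \<bar>h x\<bar> \<le> N"
  shows "capprox \<rho> \<gamma> h"
  unfolding capprox_def
proof (intro conjI allI impI)
  show "h \<in> borel_measurable borel" by fact
  show "\<exists>B. \<forall>x. \<bar>h x\<bar> \<le> B" using hb by blast
  fix e :: real assume e: "e > 0"
  define k :: nat where "k = nat \<lceil>2 / e\<rceil> + 1"
  have kp: "real k > 0" by (simp add: k_def)
  have "2 / e < real k" unfolding k_def using real_nat_ceiling_ge[of "2/e"] by linarith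
  then have ke: "1 / real k < e / 2" using e kp by (simp add: field_simps)
  define m :: int where "m = \<lceil>real k * N\<rceil>"
  define S where "S = {-m..m}"
  define hk where "hk = (\<lambda>x. \<Sum>j\<in>S. (real_of_int j / real k) * indicator {y. \<lfloor>real k * h y\<rfloor> = j} x)"
  have fl: "\<lfloor>real k * h x\<rfloor> \<in> S" for x
  proof -
    have "\<bar>real k * h x\<bar> \<le> real k * N" using hb[of x] kp by (simp add: abs_mult mult_left_mono)
    then have "- (real k * N) \<le> real k * h x" "real k * h x \<le> real k * N" by linarith+
    moreover have "real k * h x - 1 < real_of_int \<lfloor>real k * h x\<rfloor>"
      "real_of_int \<lfloor>real k * h x\<rfloor> \<le> real k * h x"
      "real k * N \<le> real_of_int m" unfolding m_def by linarith+
    ultimately have "real_of_int (- m - 1) < real_of_int \<lfloor>real k * h x\<rfloor>"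
      "real_of_int \<lfloor>real k * h x\<rfloor> \<le> real_of_int m" by linarith+
    then have "- m - 1 < \<lfloor>real k * h x\<rfloor>" "\<lfloor>real k * h x\<rfloor> \<le> m"
      by (simp_all only: of_int_less_iff of_int_le_iff)
    then show ?thesis unfolding S_def by simp
  qed
  have hk_eq: "hk x = real_of_int \<lfloor>real k * h x\<rfloor> / real k" for x
  proof -
    have "hk x = (\<Sum>j\<in>S. if \<lfloor>real k * h x\<rfloor> = j then real_of_int j / real k else 0)"
      unfolding hk_def by (intro sum.cong) (auto simp: indicator_def)
    also have "\<dots> = real_of_int \<lfloor>real k * h x\<rfloor> / real k" using fl[of x] unfolding S_def by (subst sum.delta') auto
    finally show ?thesis .
  qed
  have hkd: "\<bar>h x - hk x\<bar> \<le> 1 / real k" for x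
  proof -
    have "real k * h x - 1 < real_of_int \<lfloor>real k * h x\<rfloor>" "real_of_int \<lfloor>real k * h x\<rfloor> \<le> real k * h x"
      by linarith+
    then have "\<bar>real k * h x - real_of_int \<lfloor>real k * h x\<rfloor>\<bar> \<le> 1" by linarith
    moreover have "h x - real_of_int \<lfloor>real k * h x\<rfloor> / real k = (real k * h x - real_of_int \<lfloor>real k * h x\<rfloor>) / real k"
      using kp by (simp add: diff_divide_distrib)
    ultimately have "\<bar>h x - real_of_int \<lfloor>real k * h x\<rfloor> / real k\<bar> \<le> 1 / real k"
      using kp by (simp add: abs_div_pos divide_right_mono)
    then show ?thesis by (simp add: hk_eq)
  qed
  have setm: "{y. \<lfloor>real k * h y\<rfloor> = j} \<in> sets borel" for j
  proof -
    have "(\<lambda>y. \<lfloor>real k * h y\<rfloor>) \<in> measurable borel (count_space UNIV)" using hm by measurable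
    then have "(\<lambda>y. \<lfloor>real k * h y\<rfloor>) -` {j} \<inter> space borel \<in> sets borel"
      by (rule measurable_sets) simp
    then show ?thesis by (simp add: vimage_def)
  qed
  have chk: "capprox \<rho> \<gamma> hk" unfolding hk_def
    by (intro capprox_sum capprox_scale capprox_indicator setm) (simp add: S_def)
  then obtain \<psi> C where p: "continuous_on UNIV \<psi>" "\<forall>x. \<bar>\<psi> x\<bar> \<le> C"
      "(\<integral>x. \<bar>hk x - \<psi> x\<bar> \<partial>\<rho>) < e/2" "(\<integral>x. \<bar>hk x - \<psi> x\<bar> \<partial>\<gamma>) < e/2"
    using e unfolding capprox_def by (meson half_gt_zero)
  have hkm: "hk \<in> borel_measurable borel" using chk unfolding capprox_def by auto
  have m1: "(\<lambda>x. h x - hk x) \<in> borel_measurable borel" using hm hkm by simp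
  have m2: "(\<lambda>x. hk x - \<psi> x) \<in> borel_measurable borel"
    using hkm borel_measurable_continuous_onI[OF p(1)] by simp
  have k1: "1 / real k \<le> 1" using kp by (simp add: k_def)
  have b2: "\<bar>hk x - \<psi> x\<bar> \<le> N + 1 + C" for x
    using hkd[of x] hb[of x] p(2)[rule_format, of x] k1 by linarith
  have eq: "(\<lambda>x. \<bar>h x - \<psi> x\<bar>) = (\<lambda>x. \<bar>(h x - hk x) + (hk x - \<psi> x)\<bar>)" by simp
  have bnd: "(\<integral>x. \<bar>h x - hk x\<bar> \<partial>M) \<le> 1 / real k" if M: "prob_space M" "sets M = sets borel" for M
  proof -
    interpret prob_space M by fact
    have "(\<integral>x. \<bar>h x - hk x\<bar> \<partial>M) \<le> (\<integral>x. 1 / real k \<partial>M)"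
    proof (rule integral_mono)
      show "integrable M (\<lambda>x. \<bar>h x - hk x\<bar>)"
        by (rule bint[where B="1 / real k"]) (use m1 hkd M(2) bmeas in auto, unfold_locales)
    qed (use hkd in auto)
    then show ?thesis by (simp add: prob_space)
  qed
  show "\<exists>\<psi> B. continuous_on UNIV \<psi> \<and> (\<forall>x. \<bar>\<psi> x\<bar> \<le> B) \<and>
        (\<integral>x. \<bar>h x - \<psi> x\<bar> \<partial>\<rho>) < e \<and> (\<integral>x. \<bar>h x - \<psi> x\<bar> \<partial>\<gamma>) < e"
  proof (intro exI conjI)
    show "continuous_on UNIV \<psi>" by fact
    show "\<forall>x. \<bar>\<psi> x\<bar> \<le> C" by fact
    show "(\<integral>x. \<bar>h x - \<psi> x\<bar> \<partial>\<rho>) < e"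
      unfolding eq using int_tri[OF rho sr m1 m2 hkd b2] bnd[OF rho sr] p(3) ke by linarith
    show "(\<integral>x. \<bar>h x - \<psi> x\<bar> \<partial>\<gamma>) < e"
      unfolding eq using int_tri[OF gam sg m1 m2 hkd b2] bnd[OF gam sg] p(4) ke by linarith
  qed
qed

lemma approx_clamp:
  fixes h :: "'b \<Rightarrow> real"
  assumes hm: "h \<in> borel_measurable borel" and hb: "\<And>x. \<bar>h x\<bar> \<le> N" and e: "e > 0"
  shows "\<exists>\<psi>. continuous_on UNIV \<psi> \<and> (\<forall>x. \<bar>\<psi> x\<bar> \<le> N) \<and>
           (\<integral>x. \<bar>h x - \<psi> x\<bar> \<partial>\<rho>) < e \<and> (\<integral>x. \<bar>h x - \<psi> x\<bar> \<partial>\<gamma>) < e"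
proof -
  obtain \<psi>0 C where p: "continuous_on UNIV \<psi>0" "\<forall>x. \<bar>\<psi>0 x\<bar> \<le> C"
      "(\<integral>x. \<bar>h x - \<psi>0 x\<bar> \<partial>\<rho>) < e" "(\<integral>x. \<bar>h x - \<psi>0 x\<bar> \<partial>\<gamma>) < e"
    using capprox_all[OF hm hb] e unfolding capprox_def by meson
  have N0: "0 \<le> N" using hb[of undefined] by linarith
  define \<psi> where "\<psi> = (\<lambda>x. max (- N) (min N (\<psi>0 x)))"
  have pc: "continuous_on UNIV \<psi>" unfolding \<psi>_def using p(1) by (intro continuous_intros)
  have pb: "\<forall>x. \<bar>\<psi> x\<bar> \<le> N" using N0 by (auto simp: \<psi>_def)
  have pw: "\<bar>h x - \<psi> x\<bar> \<le> \<bar>h x - \<psi>0 x\<bar>" for x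
    using hb[of x] unfolding \<psi>_def by (auto simp: abs_le_iff max_def min_def)
  have mm: "(\<lambda>x. \<bar>h x - \<psi> x\<bar>) \<in> borel_measurable borel"
    using hm borel_measurable_continuous_onI[OF pc] by simp
  have mm0: "(\<lambda>x. \<bar>h x - \<psi>0 x\<bar>) \<in> borel_measurable borel"
    using hm borel_measurable_continuous_onI[OF p(1)] by simp
  have cmp: "(\<integral>x. \<bar>h x - \<psi> x\<bar> \<partial>M) \<le> (\<integral>x. \<bar>h x - \<psi>0 x\<bar> \<partial>M)"
    if M: "prob_space M" "sets M = sets borel" for M
  proof -
    interpret prob_space M by fact
    have fm: "finite_measure M" by unfold_locales
    show ?thesis
    proof (rule integral_mono)
      show "integrable M (\<lambda>x. \<bar>h x - \<psi> x\<bar>)"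
      proof (rule bint2[OF fm M(2) mm])
        fix x show "\<bar>\<bar>h x - \<psi> x\<bar>\<bar> \<le> 2 * N" using hb[of x] pb[rule_format, of x] by linarith
      qed
      show "integrable M (\<lambda>x. \<bar>h x - \<psi>0 x\<bar>)"
      proof (rule bint[OF fm, where B="N + C"])
        show "(\<lambda>x. \<bar>h x - \<psi>0 x\<bar>) \<in> borel_measurable M" using mm0 M(2) bmeas by auto
        fix x show "\<bar>\<bar>h x - \<psi>0 x\<bar>\<bar> \<le> N + C" using hb[of x] p(2)[rule_format, of x] by linarith
      qed
    qed (use pw in auto)
  qed
  show ?thesis using pc pb cmp[OF rho sr] cmp[OF gam sg] p(3,4)
    by (intro exI[of _ \<psi>]) auto
qed

lemma dv_cont:
  assumes Mlt: "ereal M < rel_ent \<gamma> \<rho>"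
  shows "\<exists>\<psi>. continuous_on UNIV \<psi> \<and> (\<exists>B. \<forall>x. \<bar>\<psi> x\<bar> \<le> B) \<and>
           M < (\<integral>x. \<psi> x \<partial>\<gamma>) - ln (\<integral>x. exp (\<psi> x) \<partial>\<rho>)"
proof -
  interpret R: prob_space \<rho> by (rule rho)
  interpret G: prob_space \<gamma> by (rule gam)
  have rfm: "finite_measure \<rho>" and gfm: "finite_measure \<gamma>" by unfold_locales
  have sgr: "sets \<gamma> = sets \<rho>" using sr sg by simp
  obtain \<phi> N where ph: "\<phi> \<in> borel_measurable \<rho>" "\<forall>x. \<bar>\<phi> x\<bar> \<le> N"
      "M < (\<integral>x. \<phi> x \<partial>\<gamma>) - ln (\<integral>x. exp (\<phi> x) \<partial>\<rho>)"
    using dv_meas[OF rho gam sgr Mlt] by blast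
  have phb: "\<And>x. \<bar>\<phi> x\<bar> \<le> N" using ph(2) by blast
  have phm: "\<phi> \<in> borel_measurable borel" using ph(1) unfolding measurable_cong_sets[OF sr refl] .
  define Zp where "Zp = (\<integral>x. exp (\<phi> x) \<partial>\<rho>)"
  define \<eta> where "\<eta> = (\<integral>x. \<phi> x \<partial>\<gamma>) - ln Zp - M"
  have etap: "\<eta> > 0" using ph(3) by (simp add: \<eta>_def Zp_def)
  define \<delta> where "\<delta> = \<eta> / (2 * (1 + exp (2 * N)))"
  have dp: "\<delta> > 0" using etap by (simp add: \<delta>_def add_pos_pos)
  obtain \<psi> where ps: "continuous_on UNIV \<psi>" "\<forall>x. \<bar>\<psi> x\<bar> \<le> N"
      "(\<integral>x. \<bar>\<phi> x - \<psi> x\<bar> \<partial>\<rho>) < \<delta>" "(\<integral>x. \<bar>\<phi> x - \<psi> x\<bar> \<partial>\<gamma>) < \<delta>"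
    using approx_clamp[OF phm phb dp] by blast
  have psb: "\<And>x. \<bar>\<psi> x\<bar> \<le> N" using ps(2) by blast
  have psm: "\<psi> \<in> borel_measurable borel" using borel_measurable_continuous_onI[OF ps(1)] .
  have dm: "(\<lambda>x. \<bar>\<phi> x - \<psi> x\<bar>) \<in> borel_measurable borel" using phm psm by simp
  have db: "\<bar>\<bar>\<phi> x - \<psi> x\<bar>\<bar> \<le> 2 * N" for x using phb[of x] psb[of x] by linarith
  define Zs where "Zs = (\<integral>x. exp (\<psi> x) \<partial>\<rho>)"
  have ig: "(\<integral>x. \<phi> x \<partial>\<gamma>) - (\<integral>x. \<psi> x \<partial>\<gamma>) \<le> \<delta>"
  proof -
    have i1: "integrable \<gamma> \<phi>" by (rule bint[OF gfm, where B=N]) (use phm sg bmeas phb in auto)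
    have i2: "integrable \<gamma> \<psi>" by (rule bint[OF gfm, where B=N]) (use psm sg bmeas psb in auto)
    have i3: "integrable \<gamma> (\<lambda>x. \<bar>\<phi> x - \<psi> x\<bar>)" by (rule bint[OF gfm, where B="2*N"]) (use dm sg bmeas db in auto)
    have "(\<integral>x. \<phi> x \<partial>\<gamma>) - (\<integral>x. \<psi> x \<partial>\<gamma>) = (\<integral>x. \<phi> x - \<psi> x \<partial>\<gamma>)" using i1 i2 by simp
    also have "\<dots> \<le> (\<integral>x. \<bar>\<phi> x - \<psi> x\<bar> \<partial>\<gamma>)" by (rule integral_mono) (use i1 i2 i3 in auto)
    finally show ?thesis using ps(4) by linarith
  qed
  have e1: "integrable \<rho> (\<lambda>x. exp (\<phi> x))"
  proof (rule bint2[OF rfm sr])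
    show "(\<lambda>x. exp (\<phi> x)) \<in> borel_measurable borel" using phm by simp
    fix x show "\<bar>exp (\<phi> x)\<bar> \<le> exp N" using phb[of x] by (simp add: abs_le_iff)
  qed
  have e2: "integrable \<rho> (\<lambda>x. exp (\<psi> x))"
  proof (rule bint2[OF rfm sr])
    show "(\<lambda>x. exp (\<psi> x)) \<in> borel_measurable borel" using psm by simp
    fix x show "\<bar>exp (\<psi> x)\<bar> \<le> exp N" using psb[of x] by (simp add: abs_le_iff)
  qed
  have i3: "integrable \<rho> (\<lambda>x. \<bar>\<phi> x - \<psi> x\<bar>)" by (rule bint[OF rfm, where B="2*N"]) (use dm sr bmeas db in auto)
  have pwe: "exp (\<psi> x) \<le> exp (\<phi> x) + exp N * \<bar>\<phi> x - \<psi> x\<bar>" for x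
  proof -
    have "1 + (\<phi> x - \<psi> x) \<le> exp (\<phi> x - \<psi> x)" by simp
    then have "exp (\<psi> x) * (1 + (\<phi> x - \<psi> x)) \<le> exp (\<psi> x) * exp (\<phi> x - \<psi> x)"
      by (intro mult_left_mono) auto
    then have "exp (\<psi> x) + exp (\<psi> x) * (\<phi> x - \<psi> x) \<le> exp (\<phi> x)"
      by (simp add: algebra_simps exp_diff)
    moreover have "exp (\<psi> x) * (\<psi> x - \<phi> x) \<le> exp N * \<bar>\<phi> x - \<psi> x\<bar>"
    proof -
      have "exp (\<psi> x) * (\<psi> x - \<phi> x) \<le> exp (\<psi> x) * \<bar>\<phi> x - \<psi> x\<bar>" by (intro mult_left_mono) auto
      also have "\<dots> \<le> exp N * \<bar>\<phi> x - \<psi> x\<bar>" using psb[of x] by (intro mult_right_mono) auto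
      finally show ?thesis .
    qed
    ultimately show ?thesis by (simp add: algebra_simps)
  qed
  have Zs_le: "Zs \<le> Zp + exp N * \<delta>"
  proof -
    have "Zs \<le> (\<integral>x. exp (\<phi> x) + exp N * \<bar>\<phi> x - \<psi> x\<bar> \<partial>\<rho>)" unfolding Zs_def
      by (rule integral_mono) (use e1 e2 i3 pwe in auto)
    also have "\<dots> = Zp + exp N * (\<integral>x. \<bar>\<phi> x - \<psi> x\<bar> \<partial>\<rho>)" using e1 i3 by (simp add: Zp_def)
    also have "\<dots> \<le> Zp + exp N * \<delta>" using ps(3) by simp
    finally show ?thesis .
  qed
  have lowZ: "exp (- N) \<le> (\<integral>x. exp (f x) \<partial>\<rho>)" if "integrable \<rho> (\<lambda>x. exp (f x))" "\<And>x. \<bar>f x\<bar> \<le> N" for f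
  proof -
    have "(\<integral>x. exp (- N) \<partial>\<rho>) \<le> (\<integral>x. exp (f x) \<partial>\<rho>)"
    proof (rule integral_mono[OF _ that(1)])
      fix x show "exp (- N) \<le> exp (f x)" using that(2)[of x] by (simp add: abs_le_iff)
    qed simp
    then show ?thesis by (simp add: R.prob_space)
  qed
  have Zpl: "exp (- N) \<le> Zp" unfolding Zp_def by (rule lowZ[OF e1 phb])
  have Zsl: "exp (- N) \<le> Zs" unfolding Zs_def by (rule lowZ[OF e2 psb])
  have Zpp: "Zp > 0" using Zpl exp_gt_zero[of "- N"] by linarith
  have Zsp: "Zs > 0" using Zsl exp_gt_zero[of "- N"] by linarith
  have "ln Zs - ln Zp = ln (Zs / Zp)" using Zpp Zsp by (simp add: ln_div)
  also have "\<dots> \<le> Zs / Zp - 1" using Zpp Zsp by (intro ln_le_minus_one) simp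
  also have "\<dots> = (Zs - Zp) / Zp" using Zpp by (simp add: field_simps)
  also have "\<dots> \<le> (exp N * \<delta>) / Zp" using Zs_le Zpp by (intro divide_right_mono) auto
  also have "\<dots> \<le> (exp N * \<delta>) / exp (- N)" using Zpl dp Zpp by (intro divide_left_mono) auto
  also have "\<dots> = exp (2 * N) * \<delta>" by (simp add: exp_minus field_simps flip: exp_add)
  finally have lnd: "ln Zs - ln Zp \<le> exp (2 * N) * \<delta>" .
  have pos: "1 + exp (2 * N) > 0" by (simp add: add_pos_pos)
  have "\<delta> * (1 + exp (2 * N)) = \<eta> / 2" unfolding \<delta>_def using pos by (simp add: field_simps)
  then have "M < (\<integral>x. \<psi> x \<partial>\<gamma>) - ln Zs"
    using ig lnd etap unfolding \<eta>_def by (simp add: algebra_simps)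
  then show ?thesis using ps(1) psb by (intro exI[of _ \<psi>]) (auto simp: Zs_def)
qed

end



lemma ereal_add_nonneg_le: "(0::ereal) \<le> a \<Longrightarrow> b \<le> a + b"
  by (simp add: add_increasing)

theorem mainTheorem5:
  fixes c :: "'a::euclidean_space \<times> 'a \<Rightarrow> real"
    and \<mu> \<nu> :: "'a measure"
  assumes c_cont: "continuous_on UNIV c"
    and mu_prob: "prob_space \<mu>" and mu_sets: "sets \<mu> = sets borel"
    and nu_prob: "prob_space \<nu>" and nu_sets: "sets \<nu> = sets borel"
    and mu_supp: "\<exists>K. compact K \<and> emeasure \<mu> (space \<mu> - K) = 0"
    and nu_supp: "\<exists>K. compact K \<and> emeasure \<nu> (space \<nu> - K) = 0"
    and mu_ac: "absolutely_continuous lborel \<mu>"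
    and nu_ac: "absolutely_continuous lborel \<nu>"
    and mu_ent: "(\<integral>\<^sup>+ x. ennreal (ln (enn2real (RN_deriv lborel \<mu> x))) \<partial>\<mu>) < \<infinity>"
    and nu_ent: "(\<integral>\<^sup>+ x. ennreal (ln (enn2real (RN_deriv lborel \<nu> x))) \<partial>\<nu>) < \<infinity>"
  shows "gamma_conv_narrow (couplings \<mu> \<nu>)
           (\<lambda>e \<gamma>. ereal (((\<integral> z. c z \<partial>\<gamma>) - ot_cost c \<mu> \<nu>) / e) + rel_ent \<gamma> (\<mu> \<Otimes>\<^sub>M \<nu>))
           (\<lambda>\<gamma>. if \<gamma> \<in> opt_couplings c \<mu> \<nu> then rel_ent \<gamma> (\<mu> \<Otimes>\<^sub>M \<nu>) else \<infinity>)"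
proof -
  define \<rho> where "\<rho> = \<mu> \<Otimes>\<^sub>M \<nu>"
  define W where "W = ot_cost c \<mu> \<nu>"
  define X where "X = couplings \<mu> \<nu>"
  have rho: "prob_space \<rho>" unfolding \<rho>_def by (rule prob_space_pair[OF mu_prob nu_prob])
  have sr: "sets \<rho> = sets borel"
    unfolding \<rho>_def using sets_pair_measure_cong[OF mu_sets nu_sets] borel_prod by metis
  have Xd: "prob_space \<gamma>" "sets \<gamma> = sets borel" "distr \<gamma> borel fst = \<mu>" "distr \<gamma> borel snd = \<nu>"
    if "\<gamma> \<in> X" for \<gamma> using that by (auto simp: X_def couplings_def)
  obtain K1 where K1: "compact K1" "emeasure \<mu> (space \<mu> - K1) = 0" using mu_supp by blast
  obtain K2 where K2: "compact K2" "emeasure \<nu> (space \<nu> - K2) = 0" using nu_supp by blast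
  have spmu: "space \<mu> = UNIV" using sets_eq_imp_space_eq[OF mu_sets] by simp
  have spnu: "space \<nu> = UNIV" using sets_eq_imp_space_eq[OF nu_sets] by simp
  have cpl: "AE z in \<gamma>. z \<in> K1 \<times> K2" if g: "\<gamma> \<in> X" for \<gamma>
  proof -
    have sp: "space \<gamma> = UNIV" using sets_eq_imp_space_eq[OF Xd(2)[OF g]] by simp
    have mf: "fst \<in> measurable \<gamma> borel"
      unfolding measurable_cong_sets[OF Xd(2)[OF g] refl]
      by (intro borel_measurable_continuous_onI continuous_intros)
    have ms: "snd \<in> measurable \<gamma> borel"
      unfolding measurable_cong_sets[OF Xd(2)[OF g] refl]
      by (intro borel_measurable_continuous_onI continuous_intros)
    have cK1: "- K1 \<in> sets borel" using K1(1) by (simp add: compact_imp_closed borel_closed)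
    have cK2: "- K2 \<in> sets borel" using K2(1) by (simp add: compact_imp_closed borel_closed)
    have n1: "fst -` (- K1) \<inter> space \<gamma> \<in> null_sets \<gamma>"
    proof -
      have "emeasure \<gamma> (fst -` (- K1) \<inter> space \<gamma>) = emeasure (distr \<gamma> borel fst) (- K1)"
        by (rule emeasure_distr[OF mf cK1, symmetric])
      also have "\<dots> = 0" using K1(2) Xd(3)[OF g] spmu by (simp add: Compl_eq_Diff_UNIV)
      finally show ?thesis using measurable_sets[OF mf cK1] by auto
    qed
    have n2: "snd -` (- K2) \<inter> space \<gamma> \<in> null_sets \<gamma>"
    proof -
      have "emeasure \<gamma> (snd -` (- K2) \<inter> space \<gamma>) = emeasure (distr \<gamma> borel snd) (- K2)"
        by (rule emeasure_distr[OF ms cK2, symmetric])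
      also have "\<dots> = 0" using K2(2) Xd(4)[OF g] spnu by (simp add: Compl_eq_Diff_UNIV)
      finally show ?thesis using measurable_sets[OF ms cK2] by auto
    qed
    have "AE z in \<gamma>. z \<notin> (fst -` (- K1) \<inter> space \<gamma>) \<union> (snd -` (- K2) \<inter> space \<gamma>)"
      by (rule AE_not_in) (use n1 n2 in auto)
    then show ?thesis by eventually_elim (auto simp: sp mem_Times_iff)
  qed
  have ccomp: "compact (c ` (K1 \<times> K2))"
    by (rule compact_continuous_image[OF continuous_on_subset[OF c_cont] compact_Times[OF K1(1) K2(1)]]) simp
  obtain B0 where B0: "\<forall>z\<in>c ` (K1 \<times> K2). norm z \<le> B0"
    using compact_imp_bounded[OF ccomp] unfolding bounded_iff by blast
  define B where "B = max B0 0"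
  have Bc: "\<And>z. z \<in> K1 \<times> K2 \<Longrightarrow> \<bar>c z\<bar> \<le> B" using B0 by (force simp: B_def)
  have B0': "B \<ge> 0" by (simp add: B_def)
  define c' where "c' = (\<lambda>z. max (- B) (min B (c z)))"
  have cc': "continuous_on UNIV c'" unfolding c'_def using c_cont by (intro continuous_intros)
  have bc': "\<And>z. \<bar>c' z\<bar> \<le> B" using B0' by (auto simp: c'_def)
  have brc': "bounded (range c')" unfolding bounded_iff using bc' by auto
  have cm: "c \<in> borel_measurable borel" by (rule borel_measurable_continuous_onI[OF c_cont])
  have cm': "c' \<in> borel_measurable borel" by (rule borel_measurable_continuous_onI[OF cc'])
  have eqc: "(\<integral>z. c z \<partial>\<gamma>) = (\<integral>z. c' z \<partial>\<gamma>)" if g: "\<gamma> \<in> X" for \<gamma>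
  proof (rule integral_cong_AE)
    show "c \<in> borel_measurable \<gamma>" using cm Xd(2)[OF g] bmeas by blast
    show "c' \<in> borel_measurable \<gamma>" using cm' Xd(2)[OF g] bmeas by blast
    show "AE x in \<gamma>. c x = c' x" using cpl[OF g] by eventually_elim (use Bc in \<open>force simp: c'_def\<close>)
  qed
  have lowc: "- B \<le> (\<integral>z. c z \<partial>\<gamma>)" if g: "\<gamma> \<in> X" for \<gamma>
  proof -
    interpret P: prob_space \<gamma> using Xd(1)[OF g] .
    have fm: "finite_measure \<gamma>" by unfold_locales
    have "(\<integral>z. - B \<partial>\<gamma>) \<le> (\<integral>z. c' z \<partial>\<gamma>)"
    proof (rule integral_mono[OF _ bint2[OF fm Xd(2)[OF g] cm' bc']])
      fix z show "- B \<le> c' z" using B0' by (simp add: c'_def)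
    qed simp
    then show ?thesis using eqc[OF g] by (simp add: P.prob_space)
  qed
  have bdd: "bdd_below ((\<lambda>\<gamma>. \<integral>z. c z \<partial>\<gamma>) ` X)"
    using lowc by (intro bdd_belowI2) auto
  have Wle: "W \<le> (\<integral>z. c z \<partial>\<gamma>)" if "\<gamma> \<in> X" for \<gamma>
    unfolding W_def ot_cost_def X_def[symmetric] by (rule cINF_lower[OF bdd that])
  have ent0: "0 \<le> rel_ent \<gamma> \<rho>" if g: "\<gamma> \<in> X" for \<gamma>
  proof -
    interpret R: prob_space \<rho> by (rule rho)
    have "ereal ((\<integral>x. (\<lambda>_. 0::real) x \<partial>\<gamma>) - ln (\<integral>x. exp ((\<lambda>_. 0::real) x) \<partial>\<rho>)) \<le> rel_ent \<gamma> \<rho>"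
      by (rule gibbs[OF rho Xd(1)[OF g] _ _, where N=0]) (use Xd(2)[OF g] sr in auto)
    then show ?thesis by (simp add: R.prob_space zero_ereal_def)
  qed
  have ntriv: "at_right (0::real) \<noteq> bot" by simp
  show ?thesis
    unfolding gamma_conv_narrow_def \<rho>_def[symmetric] W_def[symmetric] X_def[symmetric]
  proof (intro conjI ballI allI impI)
    fix \<gamma> assume g: "\<gamma> \<in> X"
    show "\<exists>\<gamma>s. (\<forall>e>0. \<gamma>s e \<in> X) \<and> narrow_conv (at_right 0) \<gamma>s \<gamma> \<and>
          Limsup (at_right 0) (\<lambda>e. ereal (((\<integral>z. c z \<partial>\<gamma>s e) - W) / e) + rel_ent (\<gamma>s e) \<rho>)
          \<le> (if \<gamma> \<in> opt_couplings c \<mu> \<nu> then rel_ent \<gamma> \<rho> else \<infinity>)"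
    proof (intro exI[of _ "\<lambda>_. \<gamma>"] conjI)
      show "\<forall>e>0. \<gamma> \<in> X" using g by simp
      show "narrow_conv (at_right 0) (\<lambda>_. \<gamma>) \<gamma>" unfolding narrow_conv_def by simp
      show "Limsup (at_right 0) (\<lambda>e. ereal (((\<integral>z. c z \<partial>\<gamma>) - W) / e) + rel_ent \<gamma> \<rho>)
          \<le> (if \<gamma> \<in> opt_couplings c \<mu> \<nu> then rel_ent \<gamma> \<rho> else \<infinity>)"
      proof (cases "\<gamma> \<in> opt_couplings c \<mu> \<nu>")
        case True
        then have "(\<integral>z. c z \<partial>\<gamma>) = W" by (simp add: opt_couplings_def W_def)
        then show ?thesis using True ntriv by (simp add: Limsup_const)
      qed simp
    qed
  next
    fix \<gamma> and \<gamma>s :: "real \<Rightarrow> ('a \<times> 'a) measure" assume g: "\<gamma> \<in> X" and ev: "\<forall>\<^sub>F e in at_right 0. \<gamma>s e \<in> X"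
      and nc: "narrow_conv (at_right 0) \<gamma>s \<gamma>"
    define H where "H = (\<lambda>e. ereal (((\<integral>z. c z \<partial>\<gamma>s e) - W) / e) + rel_ent (\<gamma>s e) \<rho>)"
    have ev2: "\<forall>\<^sub>F e in at_right 0. 0 < e \<and> \<gamma>s e \<in> X"
      using ev eventually_at_right_less[of 0] by eventually_elim auto
    have Hge: "\<forall>\<^sub>F e in at_right 0. rel_ent (\<gamma>s e) \<rho> \<le> H e"
      using ev2
    proof eventually_elim
      case (elim e)
      have "0 \<le> ((\<integral>z. c z \<partial>\<gamma>s e) - W) / e" using Wle[of "\<gamma>s e"] elim by simp
      then show ?case unfolding H_def by (intro ereal_add_nonneg_le) simp
    qed
    show "(if \<gamma> \<in> opt_couplings c \<mu> \<nu> then rel_ent \<gamma> \<rho> else \<infinity>) \<le> Liminf (at_right 0) H"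
      unfolding H_def[symmetric]
    proof (cases "\<gamma> \<in> opt_couplings c \<mu> \<nu>")
      case True
      have "rel_ent \<gamma> \<rho> \<le> Liminf (at_right 0) H"
      proof (rule ccontr)
        assume "\<not> ?thesis"
        then have "Liminf (at_right 0) H < rel_ent \<gamma> \<rho>" by (simp add: not_le)
        then obtain M where M: "Liminf (at_right 0) H < ereal M" "ereal M < rel_ent \<gamma> \<rho>"
          using ereal_dense2 by blast
        obtain \<psi> Bp where ps: "continuous_on UNIV \<psi>" "\<forall>x. \<bar>\<psi> x\<bar> \<le> Bp"
          "M < (\<integral>x. \<psi> x \<partial>\<gamma>) - ln (\<integral>x. exp (\<psi> x) \<partial>\<rho>)"
          using dv_cont[OF rho Xd(1)[OF g] sr Xd(2)[OF g] M(2)] by blast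
        define Z where "Z = (\<integral>x. exp (\<psi> x) \<partial>\<rho>)"
        have psm: "\<psi> \<in> borel_measurable \<rho>" using bmeas[OF sr borel_measurable_continuous_onI[OF ps(1)]] .
        have brp: "bounded (range \<psi>)" unfolding bounded_iff using ps(2) by auto
        have n\<psi>: "((\<lambda>e. \<integral>x. \<psi> x \<partial>\<gamma>s e) \<longlongrightarrow> (\<integral>x. \<psi> x \<partial>\<gamma>)) (at_right 0)"
          using nc ps(1) brp unfolding narrow_conv_def by blast
        have lo: "\<forall>\<^sub>F e in at_right 0. ereal ((\<integral>x. \<psi> x \<partial>\<gamma>s e) - ln Z) \<le> H e"
          using ev2 Hge
        proof eventually_elim
          case (elim e)
          have pe: "prob_space (\<gamma>s e)" using Xd(1) elim by blast
          have se: "sets (\<gamma>s e) = sets \<rho>" using Xd(2) elim sr by blast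
          have pb: "\<And>x. \<bar>\<psi> x\<bar> \<le> Bp" using ps(2) by blast
          have "ereal ((\<integral>x. \<psi> x \<partial>\<gamma>s e) - ln Z) \<le> rel_ent (\<gamma>s e) \<rho>"
            unfolding Z_def by (rule gibbs[OF rho pe se psm pb])
          then show ?case using elim by simp
        qed
        have lim2: "((\<lambda>e. ereal ((\<integral>x. \<psi> x \<partial>\<gamma>s e) - ln Z)) \<longlongrightarrow> ereal ((\<integral>x. \<psi> x \<partial>\<gamma>) - ln Z)) (at_right 0)"
          by (intro tendsto_intros n\<psi>)
        have l1: "Liminf (at_right 0) (\<lambda>e. ereal ((\<integral>x. \<psi> x \<partial>\<gamma>s e) - ln Z)) = ereal ((\<integral>x. \<psi> x \<partial>\<gamma>) - ln Z)"
          by (rule lim_imp_Liminf[OF _ lim2]) simp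
        have l2: "ereal ((\<integral>x. \<psi> x \<partial>\<gamma>) - ln Z) \<le> Liminf (at_right 0) H"
          using Liminf_mono[OF lo] unfolding l1 .
        have l3: "ereal M < ereal ((\<integral>x. \<psi> x \<partial>\<gamma>) - ln Z)" using ps(3) unfolding Z_def ereal_less_eq(3) ereal_less(2) by simp
        show False using l2 l3 M(1) by (meson le_less_trans less_trans less_irrefl)
      qed
      then show ?thesis using True by simp
    next
      case False
      have ne: "(\<integral>z. c z \<partial>\<gamma>) \<noteq> W" using False g by (auto simp: opt_couplings_def W_def X_def)
      define d where "d = (\<integral>z. c z \<partial>\<gamma>) - W"
      have dp: "d > 0" using ne Wle[OF g] by (simp add: d_def)
      have limc': "((\<lambda>e. \<integral>z. c' z \<partial>\<gamma>s e) \<longlongrightarrow> (\<integral>z. c' z \<partial>\<gamma>)) (at_right 0)"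
        using nc cc' brc' unfolding narrow_conv_def by blast
      have limc: "((\<lambda>e. \<integral>z. c z \<partial>\<gamma>s e) \<longlongrightarrow> (\<integral>z. c z \<partial>\<gamma>)) (at_right 0)"
      proof (rule Lim_transform_eventually)
        show "((\<lambda>e. \<integral>z. c' z \<partial>\<gamma>s e) \<longlongrightarrow> (\<integral>z. c z \<partial>\<gamma>)) (at_right 0)" using limc' eqc[OF g] by simp
        show "\<forall>\<^sub>F e in at_right 0. (\<integral>z. c' z \<partial>\<gamma>s e) = (\<integral>z. c z \<partial>\<gamma>s e)"
          using ev by eventually_elim (simp add: eqc)
      qed
      have evc: "\<forall>\<^sub>F e in at_right 0. W + d/2 < (\<integral>z. c z \<partial>\<gamma>s e)"
        by (rule order_tendstoD(1)[OF limc]) (use dp d_def in linarith)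
      have fl: "LIM e at_right 0. (d/2) * inverse e :> at_top"
        by (rule filterlim_tendsto_pos_mult_at_top[OF tendsto_const _ filterlim_inverse_at_top_right]) (use dp in simp)
      have "(H \<longlongrightarrow> \<infinity>) (at_right 0)"
        unfolding tendsto_PInfty
      proof
        fix r :: real
        have evr: "\<forall>\<^sub>F e in at_right 0. r + 1 \<le> (d/2) * inverse e"
          using fl unfolding filterlim_at_top by blast
        show "\<forall>\<^sub>F e in at_right 0. ereal r < H e"
          using ev2 evc evr
        proof eventually_elim
          case (elim e)
          have "(d/2) / e \<le> ((\<integral>z. c z \<partial>\<gamma>s e) - W) / e"
            using elim by (intro divide_right_mono) auto
          then have "(d/2) * inverse e \<le> ((\<integral>z. c z \<partial>\<gamma>s e) - W) / e"
            by (simp only: divide_inverse)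
          then have "r < ((\<integral>z. c z \<partial>\<gamma>s e) - W) / e" using elim(3) by linarith
          then have "ereal r < ereal (((\<integral>z. c z \<partial>\<gamma>s e) - W) / e)" by simp
          also have "\<dots> \<le> H e" unfolding H_def
            by (rule add_increasing2[OF ent0 order_refl]) (use elim in blast)
          finally show ?case .
        qed
      qed
      then have "Liminf (at_right 0) H = \<infinity>" by (rule lim_imp_Liminf[rotated]) simp
      then show ?thesis by simp
    qed
  qed
qed


end
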